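(* Let $q=p^h$ with $p$ prime and $h\geq 1$, let $n\ge 2$ and let $k$ be an integer with $n/2\leq k\leq n-1$. Then \[\mathrm{C}_k(n,q)\setminus \mathrm{C}_{n-k}(n,q)^\perp=\mathrm{C}_k(n,q)\setminus \mathrm{C}_k(n,q)^\perp.\]
   Context: $\mathrm{PG}(n,q)$ is the $n$-dimensional projective space over $\mathbb{F}_q$, $q=p^h$; $\theta_n=(q^{n+1}-1)/(q-1)$. For $1\le j\le n-1$, $\mathrm{C}_j(n,q)$ is the $p$-ary linear code (a subspace of $\mathbb{F}_p^{\theta_n}$, coordinates indexed by the points of $\mathrm{PG}(n,q)$) spanned over $\mathbb{F}_p$ by the incidence vectors of the $j$-dimensional subspaces of $\mathrm{PG}(n,q)$, and $\mathrm{C}_j(n,q)^\perp$ is its dual with respect to the standard scalar product over $\mathbb{F}_p$. *)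

theory Defs
  imports Complex_Main "HOL-Library.Function_Algebras" "HOL-Library.Cardinality" "HOL-Computational_Algebra.Primes"
begin

text \<open>The ambient vector space F_q^(n+1): functions nat => F_q vanishing outside {0..n}.\<close>

definition fvec :: "nat \<Rightarrow> (nat \<Rightarrow> 'a::zero) set" where
  "fvec n = {x. \<forall>i>n. x i = 0}"

definition vscale :: "'a::field \<Rightarrow> (nat \<Rightarrow> 'a) \<Rightarrow> (nat \<Rightarrow> 'a)" where
  "vscale c x = (\<lambda>i. c * x i)"

text \<open>S is a linear subspace of F_q^(n+1) of vector dimension d
  (i.e. a projective subspace of PG(n,q) of projective dimension d-1).\<close>

definition lin_sub :: "nat \<Rightarrow> nat \<Rightarrow> (nat \<Rightarrow> 'a::field) set \<Rightarrow> bool" where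
  "lin_sub n d S \<longleftrightarrow> S \<subseteq> fvec n \<and> module.subspace vscale S \<and> vector_space.dim vscale S = d"

definition pg_points :: "nat \<Rightarrow> (nat \<Rightarrow> 'a::field) set set" where
  "pg_points n = {S. lin_sub n 1 S}"

definition pg_subspaces :: "nat \<Rightarrow> nat \<Rightarrow> (nat \<Rightarrow> 'a::field) set set" where
  "pg_subspaces n j = {S. lin_sub n (j + 1) S}"

text \<open>Incidence vector (over the field 'b = F_p) of a subspace S, coordinates indexed by points.\<close>

definition incid :: "nat \<Rightarrow> (nat \<Rightarrow> 'a::field) set \<Rightarrow> ((nat \<Rightarrow> 'a) set \<Rightarrow> 'b::field)" where
  "incid n S = (\<lambda>P. if P \<in> pg_points n \<and> P \<subseteq> S then 1 else 0)"

definition cscale :: "'b::field \<Rightarrow> ('c \<Rightarrow> 'b) \<Rightarrow> ('c \<Rightarrow> 'b)" where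
  "cscale c f = (\<lambda>P. c * f P)"

definition pcode :: "nat \<Rightarrow> nat \<Rightarrow> ((nat \<Rightarrow> 'a::field) set \<Rightarrow> 'b::field) set" where
  "pcode n j = module.span cscale (incid n ` pg_subspaces n j)"

definition pdual :: "nat \<Rightarrow> ((nat \<Rightarrow> 'a::field) set \<Rightarrow> 'b::field) set \<Rightarrow> ((nat \<Rightarrow> 'a) set \<Rightarrow> 'b) set" where
  "pdual n C = {v. (\<forall>P. P \<notin> pg_points n \<longrightarrow> v P = 0) \<and>
                   (\<forall>c\<in>C. (\<Sum>P\<in>pg_points n. v P * c P) = 0)}"

end

theory Submission imports Defs "HOL-Number_Theory.Residues" begin

lemma vs_vscale: "vector_space (vscale :: 'a::field \<Rightarrow> (nat \<Rightarrow> 'a) \<Rightarrow> _)"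
  by unfold_locales (auto simp: vscale_def algebra_simps)

lemma vs_cscale: "vector_space (cscale :: 'b::field \<Rightarrow> ('c \<Rightarrow> 'b) \<Rightarrow> _)"
  by unfold_locales (auto simp: cscale_def algebra_simps)

interpretation V: vector_space "vscale :: 'a::field \<Rightarrow> (nat \<Rightarrow> 'a) \<Rightarrow> _"
  by (rule vs_vscale)

interpretation C: vector_space "cscale :: 'b::field \<Rightarrow> ('c \<Rightarrow> 'b) \<Rightarrow> _"
  by (rule vs_cscale)

lemma sum_fun_app: "(\<Sum>i\<in>A. f i) (j::'x) = (\<Sum>i\<in>A. f i j)"
  by (induction A rule: infinite_finite_induct) (auto simp: zero_fun_def plus_fun_def)

definition ev :: "nat \<Rightarrow> nat \<Rightarrow> 'a::field" where "ev i = (\<lambda>j. if j = i then 1 else 0)"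

lemma fvec_span: "fvec n \<subseteq> V.span (ev ` {..n} :: (nat \<Rightarrow> 'a::field) set)"
proof
  fix x :: "nat \<Rightarrow> 'a" assume x: "x \<in> fvec n"
  have "x = (\<Sum>i\<in>{..n}. vscale (x i) (ev i))"
  proof
    fix j show "x j = (\<Sum>i\<in>{..n}. vscale (x i) (ev i)) j"
    proof -
      have "(\<Sum>i\<in>{..n}. vscale (x i) (ev i)) j = (\<Sum>i\<in>{..n}. if i = j then x j else 0)"
        unfolding sum_fun_app by (intro sum.cong) (auto simp: vscale_def ev_def)
      also have "\<dots> = x j" using x by (auto simp: fvec_def)
      finally show ?thesis by simp
    qed
  qed
  also have "\<dots> \<in> V.span (ev ` {..n})"
    by (intro V.span_sum V.span_scale V.span_base) auto
  finally show "x \<in> V.span (ev ` {..n})" .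
qed

lemma finite_fvec: "finite (fvec n :: (nat \<Rightarrow> 'a::{finite,zero}) set)"
proof -
  have "fvec n \<subseteq> (\<lambda>g i. if i \<le> n then g i else 0) ` (PiE {..n} (\<lambda>_. (UNIV::'a set)))"
  proof
    fix f :: "nat \<Rightarrow> 'a" assume f: "f \<in> fvec n"
    show "f \<in> (\<lambda>g i. if i \<le> n then g i else 0) ` (PiE {..n} (\<lambda>_. UNIV))"
      by (rule image_eqI[of _ _ "restrict f {..n}"]) (use f in \<open>auto simp: fvec_def\<close>)
  qed
  moreover have "finite (PiE {..n} (\<lambda>_. (UNIV::'a set)))" by (intro finite_PiE) auto
  ultimately show ?thesis by (meson finite_imageI finite_subset)
qed

lemma fvec_subspace: "V.subspace (fvec n :: (nat \<Rightarrow> 'a::field) set)"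
  by (auto simp: V.subspace_def fvec_def vscale_def)

lemma basis_fin:
  assumes "lin_sub n d (K :: (nat \<Rightarrow> 'a::field) set)"
  obtains B where "B \<subseteq> K" "V.independent B" "K \<subseteq> V.span B" "card B = d" "finite B" "V.span B = K"
proof -
  obtain B where B: "B \<subseteq> K" "V.independent B" "K \<subseteq> V.span B" "card B = V.dim K"
    using V.basis_exists by blast
  have "B \<subseteq> V.span (ev ` {..n})" using B(1) assms fvec_span unfolding lin_sub_def by blast
  then have "finite B" using V.independent_span_bound[OF _ B(2)] by blast
  moreover have "V.span B = K"
    using B assms unfolding lin_sub_def by (intro V.span_subspace) auto
  ultimately show ?thesis using B assms unfolding lin_sub_def by (intro that) auto
qed

lemma meet:
  assumes K: "lin_sub n d1 (K :: (nat \<Rightarrow> 'a::field) set)" and L: "lin_sub n d2 L"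
    and d: "n + 2 \<le> d1 + d2"
  shows "\<exists>x\<in>K \<inter> L. x \<noteq> 0"
proof (rule ccontr)
  assume "\<not> ?thesis"
  then have KL: "K \<inter> L \<subseteq> {0}" by auto
  obtain BK where BK: "BK \<subseteq> K" "V.independent BK" "card BK = d1" "finite BK" "V.span BK = K"
    using basis_fin[OF K] by metis
  obtain BL where BL: "BL \<subseteq> L" "V.independent BL" "card BL = d2" "finite BL" "V.span BL = L"
    using basis_fin[OF L] by metis
  have sK: "V.subspace K" and sL: "V.subspace L" using K L by (auto simp: lin_sub_def)
  have "V.independent (BK \<union> BL)"
    unfolding V.independent_explicit_module
  proof (intro allI impI)
    fix t u v assume t: "finite t" "t \<subseteq> BK \<union> BL" and s0: "(\<Sum>v\<in>t. vscale (u v) v) = 0"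
      and v: "v \<in> t"
    define t1 where "t1 = t \<inter> BK"
    define t2 where "t2 = t - BK"
    have t12: "t = t1 \<union> t2" "t1 \<inter> t2 = {}" "finite t1" "finite t2" "t1 \<subseteq> BK" "t2 \<subseteq> BL"
      using t by (auto simp: t1_def t2_def)
    define s1 where "s1 = (\<Sum>v\<in>t1. vscale (u v) v)"
    define s2 where "s2 = (\<Sum>v\<in>t2. vscale (u v) v)"
    have "s1 + s2 = 0" using s0 t12 unfolding s1_def s2_def by (simp add: sum.union_disjoint)
    then have e: "s1 = - s2" by (simp add: eq_neg_iff_add_eq_0)
    have "s1 \<in> V.span BK" unfolding s1_def using t12(5)
      by (intro V.span_sum V.span_scale) (auto intro: V.span_base)
    then have "s1 \<in> K" using BK(5) by simp
    moreover have "s2 \<in> V.span BL" unfolding s2_def using t12(6)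
      by (intro V.span_sum V.span_scale) (auto intro: V.span_base)
    then have "s2 \<in> L" using BL(5) by simp
    then have "s1 \<in> L" using e sL by (simp add: V.subspace_neg)
    ultimately have "s1 = 0" using KL by auto
    then have "s2 = 0" using e by simp
    show "u v = 0"
    proof (cases "v \<in> t1")
      case True then show ?thesis using V.independentD[OF BK(2) t12(3) t12(5)] \<open>s1 = 0\<close>
        unfolding s1_def by blast
    next
      case False then have "v \<in> t2" using v t12 by auto
      then show ?thesis using V.independentD[OF BL(2) t12(4) t12(6)] \<open>s2 = 0\<close>
        unfolding s2_def by blast
    qed
  qed
  moreover have "BK \<union> BL \<subseteq> V.span (ev ` {..n})"
    using BK(1) BL(1) K L fvec_span unfolding lin_sub_def by blast
  ultimately have "card (BK \<union> BL) \<le> card (ev ` {..n} :: (nat \<Rightarrow> 'a) set)"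
    using V.independent_span_bound[of "ev ` {..n}" "BK \<union> BL"] by simp
  also have "\<dots> \<le> n + 1" using card_image_le[of "{..n}" ev] by simp
  finally have c: "card (BK \<union> BL) \<le> n + 1" .
  have "BK \<inter> BL = {}"
  proof -
    have "0 \<notin> BK" using BK(2) V.dependent_zero by blast
    then show ?thesis using BK(1) BL(1) KL by blast
  qed
  then have "card (BK \<union> BL) = d1 + d2" using BK BL by (simp add: card_Un_disjoint)
  then show False using c d by simp
qed

lemma vscale_inj: "(v::nat \<Rightarrow> 'a::field) \<noteq> 0 \<Longrightarrow> inj (\<lambda>c. vscale c v)"
proof (rule injI)
  fix c d assume v: "v \<noteq> 0" and e: "vscale c v = vscale d v"
  obtain i where i: "v i \<noteq> 0" using v by (auto simp: fun_eq_iff)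
  have "c * v i = d * v i" using fun_cong[OF e, of i] by (simp add: vscale_def)
  then show "c = d" using i by simp
qed

lemma point_iff: "lin_sub n 1 (P :: (nat \<Rightarrow> 'a::field) set) \<longleftrightarrow>
   (\<exists>v. v \<noteq> 0 \<and> v \<in> fvec n \<and> P = range (\<lambda>c. vscale c v))"
proof
  assume P: "lin_sub n 1 P"
  obtain B where B: "B \<subseteq> P" "V.independent B" "card B = 1" "V.span B = P"
  proof -
    obtain B where "B \<subseteq> P" "V.independent B" "P \<subseteq> V.span B" "card B = 1" "finite B" "V.span B = P"
      by (rule basis_fin[OF P])
    then show ?thesis using that by blast
  qed
  obtain v where v: "B = {v}" using B(3) by (auto simp: card_Suc_eq)
  have "v \<noteq> 0" using B(2) v V.dependent_zero by blast
  moreover have "v \<in> fvec n" using B(1) v P by (auto simp: lin_sub_def)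
  moreover have "P = range (\<lambda>c. vscale c v)" using B(4) v by (simp add: V.span_singleton)
  ultimately show "\<exists>v. v \<noteq> 0 \<and> v \<in> fvec n \<and> P = range (\<lambda>c. vscale c v)" by blast
next
  assume "\<exists>v. v \<noteq> 0 \<and> v \<in> fvec n \<and> P = range (\<lambda>c. vscale c v)"
  then obtain v where v: "v \<noteq> 0" "v \<in> fvec n" "P = range (\<lambda>c. vscale c v)" by blast
  have P: "P = V.span {v}" using v by (simp add: V.span_singleton)
  have ind: "V.independent {v}" using v(1) by (simp add: V.independent_insert V.span_empty)
  have "V.dim P = 1" unfolding P using V.dim_span_eq_card_independent[OF ind] by simp
  moreover have "P \<subseteq> fvec n" unfolding P using v(2) fvec_subspace by (intro V.span_minimal) auto
  ultimately show "lin_sub n 1 P" unfolding lin_sub_def P by simp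
qed

lemma point_gen:
  assumes P: "lin_sub n 1 (P :: (nat \<Rightarrow> 'a::field) set)" and w: "w \<in> P" "w \<noteq> 0"
  shows "P = range (\<lambda>c. vscale c w)"
proof -
  obtain v where v: "v \<noteq> 0" "P = range (\<lambda>c. vscale c v)" using P point_iff by blast
  obtain a0 where c: "w = vscale a0 v" using w v by auto
  have c0: "a0 \<noteq> 0" using c w(2) by (auto simp: vscale_def fun_eq_iff)
  show ?thesis
  proof (intro Set.set_eqI iffI)
    fix z assume "z \<in> P"
    then obtain e where "z = vscale e v" using v by auto
    then have "z = vscale (e / a0) w" using c c0 by (simp add: vscale_def fun_eq_iff)
    then show "z \<in> range (\<lambda>c. vscale c w)" by blast
  next
    fix z assume "z \<in> range (\<lambda>c. vscale c w)"
    then obtain e where "z = vscale e w" by auto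
    then have "z = vscale (e * a0) v" using c by (simp add: vscale_def fun_eq_iff mult.assoc)
    then show "z \<in> P" using v by blast
  qed
qed

lemma card_range_scale:
  "(v::nat \<Rightarrow> 'a::{finite,field}) \<noteq> 0 \<Longrightarrow> card (range (\<lambda>c. x + vscale c v)) = CARD('a)"
proof -
  assume v: "v \<noteq> 0"
  have "inj (\<lambda>c. x + vscale c v)" using vscale_inj[OF v] by (auto simp: inj_def)
  then show ?thesis by (simp add: card_image)
qed

lemma count_points:
  fixes T :: "(nat \<Rightarrow> 'a::{finite,field}) set"
  assumes T: "T \<subseteq> fvec n" "V.subspace T"
  shows "(CARD('a) - 1) * card {P\<in>pg_points n. P \<subseteq> T} = card T - 1"
proof -
  define Pts where "Pts = {P\<in>pg_points n. P \<subseteq> T}"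
  define C where "C = (\<lambda>P. P - {0}) ` Pts"
  have pts: "P \<in> Pts \<longleftrightarrow> lin_sub n 1 P \<and> P \<subseteq> T" for P
    by (simp add: Pts_def pg_points_def)
  have finT: "finite T" using T(1) finite_fvec finite_subset by blast
  have "Pts \<subseteq> Pow (fvec n)" using pts by (auto simp: lin_sub_def)
  then have finP: "finite Pts" using finite_fvec by (meson finite_Pow_iff finite_subset)
  have zP: "0 \<in> P" if "P \<in> Pts" for P
    using that pts by (auto simp: lin_sub_def intro: V.subspace_0)
  have "(CARD('a) - 1) * card C = card (\<Union>C)"
  proof (rule card_partition)
    show "finite C" using finP by (simp add: C_def)
    show "finite (\<Union>C)" using finT pts by (auto simp: C_def intro: finite_subset)
    show "card cc = CARD('a) - 1" if "cc \<in> C" for cc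
    proof -
      note \<open>cc \<in> C\<close>
      then obtain P where P: "P \<in> Pts" "cc = P - {0}" by (auto simp: C_def)
      obtain v where v: "v \<noteq> 0" "P = range (\<lambda>c. vscale c v)" using P pts point_iff by metis
      have "card P = CARD('a)" using card_range_scale[OF v(1), of 0] v by simp
      then show "card cc = CARD('a) - 1" using P zP finP by (simp add: v(2))
    qed
    show "c1 \<inter> c2 = {}" if c: "c1 \<in> C" "c2 \<in> C" "c1 \<noteq> c2" for c1 c2
    proof -
      from c obtain P1 P2 where P: "P1 \<in> Pts" "P2 \<in> Pts" "c1 = P1 - {0}" "c2 = P2 - {0}"
        by (auto simp: C_def)
      show "c1 \<inter> c2 = {}"
      proof (rule ccontr)
        assume "c1 \<inter> c2 \<noteq> {}"
        then obtain w where w: "w \<in> P1" "w \<in> P2" "w \<noteq> 0" using P by auto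
        have "P1 = P2" using point_gen[of n P1 w] point_gen[of n P2 w] w P pts by simp
        then show False using c P by simp
      qed
    qed
  qed
  moreover have "card C = card Pts"
  proof -
    have "inj_on (\<lambda>P. P - {0}) Pts"
    proof (rule inj_onI)
      fix P1 P2 assume "P1 \<in> Pts" "P2 \<in> Pts" "P1 - {0} = P2 - {0}"
      then show "P1 = P2" using zP by (metis insert_Diff)
    qed
    then show ?thesis by (simp add: C_def card_image)
  qed
  moreover have "\<Union>C = T - {0}"
  proof (intro Set.set_eqI iffI)
    fix x assume "x \<in> \<Union>C" then show "x \<in> T - {0}" using pts by (auto simp: C_def)
  next
    fix x assume x: "x \<in> T - {0}"
    define P where "P = range (\<lambda>c. vscale c x)"
    have "lin_sub n 1 P" using point_iff x T(1) unfolding P_def by blast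
    moreover have "P \<subseteq> T" using x T(2) by (auto simp: P_def intro: V.subspace_scale)
    moreover have "x \<in> P" unfolding P_def by (rule range_eqI[of _ _ 1]) (simp add: vscale_def)
    ultimately show "x \<in> \<Union>C" using x pts by (auto simp: C_def)
  qed
  moreover have "card (T - {0}) = card T - 1" using T(2) finT by (simp add: V.subspace_0)
  ultimately show ?thesis by (simp add: Pts_def)
qed

lemma card_dvd:
  fixes T :: "(nat \<Rightarrow> 'a::{finite,field}) set"
  assumes T: "finite T" "V.subspace T" "v \<in> T" "v \<noteq> 0"
  shows "CARD('a) dvd card T"
proof -
  define cos where "cos x = range (\<lambda>c. x + vscale c v)" for x
  have cosmv: "cos y = cos x" if "y = x + vscale c v" for x y c
  proof (intro Set.set_eqI iffI)
    fix z assume "z \<in> cos y"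
    then obtain d where "z = y + vscale d v" by (auto simp: cos_def)
    then have "z = x + vscale (c + d) v" using that by (simp add: V.scale_left_distrib add.assoc)
    then show "z \<in> cos x" by (auto simp: cos_def)
  next
    fix z assume "z \<in> cos x"
    then obtain d where "z = x + vscale d v" by (auto simp: cos_def)
    then have "z = y + vscale (d - c) v" using that
      by (simp add: V.scale_left_diff_distrib algebra_simps)
    then show "z \<in> cos y" by (auto simp: cos_def)
  qed
  have U: "\<Union>(cos ` T) = T"
  proof (intro Set.set_eqI iffI)
    fix z assume "z \<in> \<Union>(cos ` T)"
    then show "z \<in> T" using T by (auto simp: cos_def intro!: V.subspace_add V.subspace_scale)
  next
    fix z assume z: "z \<in> T"
    have "z \<in> cos z" unfolding cos_def by (rule range_eqI[of _ _ 0]) (simp add: vscale_def fun_eq_iff)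
    then show "z \<in> \<Union>(cos ` T)" using z by blast
  qed
  have "CARD('a) * card (cos ` T) = card (\<Union>(cos ` T))"
  proof (rule card_partition)
    show "finite (cos ` T)" using T by simp
    show "finite (\<Union>(cos ` T))" using U T by simp
    show "card c = CARD('a)" if "c \<in> cos ` T" for c
      using card_range_scale[OF T(4)] that by (auto simp: cos_def)
    show "c1 \<inter> c2 = {}" if c: "c1 \<in> cos ` T" "c2 \<in> cos ` T" "c1 \<noteq> c2" for c1 c2
    proof -
      from c obtain x1 x2 where x: "c1 = cos x1" "c2 = cos x2" by auto
      show "c1 \<inter> c2 = {}"
      proof (rule ccontr)
        assume "c1 \<inter> c2 \<noteq> {}"
        then obtain y where y: "y \<in> cos x1" "y \<in> cos x2" using x by auto
        from y(1) obtain a where a: "y = x1 + vscale a v" unfolding cos_def by blast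
        from y(2) obtain b where b: "y = x2 + vscale b v" unfolding cos_def by blast
        have "cos x1 = cos y" using cosmv[OF a] by simp
        also have "\<dots> = cos x2" using cosmv[OF b] .
        finally have "cos x1 = cos x2" .
        then show False using c x by simp
      qed
    qed
  qed
  then show ?thesis using U by (metis dvd_triv_left)
qed

lemma count_one:
  fixes T :: "(nat \<Rightarrow> 'a::{finite,field}) set"
  assumes T: "T \<subseteq> fvec n" "V.subspace T" "v \<in> T" "v \<noteq> 0"
    and q0: "(of_nat CARD('a) :: 'b::field) = 0"
  shows "(of_nat (card {P\<in>pg_points n. P \<subseteq> T}) :: 'b) = 1"
proof -
  have finT: "finite T" using T(1) finite_fvec finite_subset by blast
  have c: "(CARD('a) - 1) * card {P\<in>pg_points n. P \<subseteq> T} = card T - 1"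
    using count_points[OF T(1,2)] .
  obtain m where m: "card T = CARD('a) * m" using card_dvd[OF finT T(2-4)] by blast
  have cT: "card T \<ge> 1" using finT T(3) card_0_eq by fastforce
  have "(of_nat (card T) :: 'b) = 0" using m q0 by simp
  then have r: "(of_nat (card T - 1) :: 'b) = -1" using cT by (simp add: of_nat_diff)
  have l: "(of_nat (CARD('a) - 1) :: 'b) = -1" using q0 by (simp add: of_nat_diff)
  have "(of_nat ((CARD('a) - 1) * card {P\<in>pg_points n. P \<subseteq> T}) :: 'b) = -1"
    using c r by simp
  then show ?thesis using l by simp
qed


lemma finite_pts: "finite (pg_points n :: (nat \<Rightarrow> 'a::{finite,field}) set set)"
proof -
  have "pg_points n \<subseteq> Pow (fvec n :: (nat \<Rightarrow> 'a) set)" by (auto simp: pg_points_def lin_sub_def)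
  then show ?thesis using finite_fvec by (meson finite_Pow_iff finite_subset)
qed

lemma ip_incid:
  fixes K L :: "(nat \<Rightarrow> 'a::{finite,field}) set"
  assumes K: "lin_sub n d1 K" and L: "lin_sub n d2 L" and d: "n + 2 \<le> d1 + d2"
    and q0: "(of_nat CARD('a) :: 'b::field) = 0"
  shows "(\<Sum>P\<in>pg_points n. incid n K P * incid n L P) = (1::'b)"
proof -
  have T: "K \<inter> L \<subseteq> fvec n" "V.subspace (K \<inter> L)"
    using K L by (auto simp: lin_sub_def intro: V.subspace_inter)
  obtain v where v: "v \<in> K \<inter> L" "v \<noteq> 0" using meet[OF K L d] by blast
  have "(\<Sum>P\<in>pg_points n. incid n K P * incid n L P) =
        (\<Sum>P\<in>pg_points n. if P \<subseteq> K \<inter> L then (1::'b) else 0)"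
    by (intro sum.cong) (auto simp: incid_def)
  also have "\<dots> = (\<Sum>P\<in>{P\<in>pg_points n. P \<subseteq> K \<inter> L}. (1::'b))"
    by (subst sum.inter_filter[OF finite_pts]) (rule refl)
  also have "\<dots> = of_nat (card {P\<in>pg_points n. P \<subseteq> K \<inter> L})" by simp
  also have "\<dots> = 1" using count_one[OF T v q0] .
  finally show ?thesis .
qed

lemma dual_span:
  fixes G :: "((nat \<Rightarrow> 'a::field) set \<Rightarrow> 'b::field) set"
  shows "v \<in> pdual n (C.span G) \<longleftrightarrow> (\<forall>P. P \<notin> pg_points n \<longrightarrow> v P = 0) \<and>
      (\<forall>g\<in>G. (\<Sum>P\<in>pg_points n. v P * g P) = 0)"
proof
  assume "v \<in> pdual n (C.span G)"
  then show "(\<forall>P. P \<notin> pg_points n \<longrightarrow> v P = 0) \<and> (\<forall>g\<in>G. (\<Sum>P\<in>pg_points n. v P * g P) = 0)"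
    by (auto simp: pdual_def intro: C.span_base)
next
  assume a: "(\<forall>P. P \<notin> pg_points n \<longrightarrow> v P = 0) \<and> (\<forall>g\<in>G. (\<Sum>P\<in>pg_points n. v P * g P) = 0)"
  have "(\<Sum>P\<in>pg_points n. v P * c P) = 0" if c: "c \<in> C.span G" for c
    using c
  proof (induction rule: C.span_induct_alt)
    case base then show ?case by simp
  next
    case (step a g y)
    have "(\<Sum>P\<in>pg_points n. v P * cscale a g P + v P * y P) =
        a * (\<Sum>P\<in>pg_points n. v P * g P) + (\<Sum>P\<in>pg_points n. v P * y P)"
      by (simp add: sum.distrib sum_distrib_left cscale_def algebra_simps)
    then show ?case using step a by (simp add: distrib_left)
  qed
  then show "v \<in> pdual n (C.span G)" using a by (auto simp: pdual_def)
qed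

lemma code_const:
  fixes G W :: "((nat \<Rightarrow> 'a::field) set \<Rightarrow> 'b::field) set"
  assumes GW: "\<And>g w. g \<in> G \<Longrightarrow> w \<in> W \<Longrightarrow> (\<Sum>P\<in>pg_points n. g P * w P) = 1"
    and Gs: "\<And>g P. g \<in> G \<Longrightarrow> P \<notin> pg_points n \<Longrightarrow> g P = 0"
    and c: "c \<in> C.span G"
  shows "\<exists>s. (\<forall>w\<in>W. (\<Sum>P\<in>pg_points n. c P * w P) = s) \<and> (s \<noteq> 0 \<longrightarrow> G \<noteq> {}) \<and>
             (\<forall>P. P \<notin> pg_points n \<longrightarrow> c P = 0)"
  using c
proof (induction rule: C.span_induct_alt)
  case base then show ?case by (intro exI[of _ 0]) simp
next
  case (step a g y)
  then obtain s where s: "\<forall>w\<in>W. (\<Sum>P\<in>pg_points n. y P * w P) = s"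
      "\<forall>P. P \<notin> pg_points n \<longrightarrow> y P = 0" by blast
  have "(\<Sum>P\<in>pg_points n. (cscale a g + y) P * w P) = a + s" if w: "w \<in> W" for w
  proof -
    have "(\<Sum>P\<in>pg_points n. (cscale a g + y) P * w P) =
        a * (\<Sum>P\<in>pg_points n. g P * w P) + (\<Sum>P\<in>pg_points n. y P * w P)"
      by (simp add: sum.distrib sum_distrib_left cscale_def algebra_simps)
    then show ?thesis using GW[OF step(1) w] s w by simp
  qed
  moreover have "\<forall>P. P \<notin> pg_points n \<longrightarrow> (cscale a g + y) P = 0"
    using s(2) Gs[OF step(1)] by (simp add: cscale_def)
  ultimately show ?case using step(1) by (intro exI[of _ "a + s"]) auto
qed


lemma sub_exists:
  assumes K: "lin_sub n d (K :: (nat \<Rightarrow> 'a::field) set)" and e: "e \<le> d"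
  shows "\<exists>L :: (nat \<Rightarrow> 'a) set. lin_sub n e L"
proof -
  obtain B where B: "B \<subseteq> K" "V.independent B" "K \<subseteq> V.span B" "card B = d" "finite B" "V.span B = K"
    by (rule basis_fin[OF K])
  have eB: "e \<le> card B" using e B(4) by simp
  obtain B' where B': "B' \<subseteq> B" "card B' = e" "finite B'"
    by (rule obtain_subset_with_card_n[OF eB])
  have Kf: "K \<subseteq> fvec n" using K unfolding lin_sub_def by blast
  have "V.span B' \<subseteq> fvec n" using V.span_mono[OF B'(1)] B(6) Kf by blast
  moreover have "V.dim (V.span B') = e"
    using V.dim_span_eq_card_independent[OF V.independent_mono[OF B(2) B'(1)]] B'(2) by simp
  moreover have "V.subspace (V.span B')" by (rule V.subspace_span)
  ultimately have "lin_sub n e (V.span B')" unfolding lin_sub_def by blast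
  then show ?thesis by (rule exI)
qed

theorem mainTheorem6:
  fixes p h n k :: nat
  assumes "prime p" and "h \<ge> 1"
    and "CARD('a) = p ^ h"
    and "CARD('b) = p"
    and "n \<ge> 2" and "n \<le> 2 * k" and "k \<le> n - 1"
  shows "(pcode n k :: ((nat \<Rightarrow> 'a::{finite,field}) set \<Rightarrow> 'b::{finite,field}) set) - pdual n (pcode n (n - k))
       = (pcode n k :: ((nat \<Rightarrow> 'a) set \<Rightarrow> 'b) set) - pdual n (pcode n k)"
proof -
  have "CHAR('b) dvd p" using CHAR_dvd_CARD[where 'a='b] assms(4) by simp
  moreover have "\<forall>m. m dvd p \<longrightarrow> m = 1 \<or> m = p" using assms(1) by (simp add: prime_nat_iff)
  ultimately have "CHAR('b) = 1 \<or> CHAR('b) = p" by blast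
  then have "CHAR('b) = p" using CHAR_not_1[where 'a='b] by auto
  then have "(of_nat p :: 'b) = 0" using of_nat_CHAR[where 'a='b] by simp
  then have q0: "(of_nat CARD('a) :: 'b) = 0" using assms(2,3) by (simp add: power_0_left)
  define G1 where "G1 = (incid n ` pg_subspaces n k :: ((nat \<Rightarrow> 'a) set \<Rightarrow> 'b) set)"
  define G2 where "G2 = (incid n ` pg_subspaces n (n - k) :: ((nat \<Rightarrow> 'a) set \<Rightarrow> 'b) set)"
  have GW: "(\<Sum>P\<in>pg_points n. g P * w P) = 1" if gw: "g \<in> G1" "w \<in> G1 \<union> G2" for g w
  proof -
    obtain K where K: "lin_sub n (k + 1) K" "g = incid n K"
      using gw(1) by (auto simp: G1_def pg_subspaces_def)
    from gw(2) consider (a) L where "lin_sub n (k + 1) L" "w = incid n L"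
      | (b) L where "lin_sub n (n - k + 1) L" "w = incid n L"
      unfolding G1_def G2_def pg_subspaces_def by blast
    then show ?thesis
    proof cases
      case a then show ?thesis using ip_incid[OF K(1) a(1) _ q0] K(2) assms(6) by simp
    next
      case b then show ?thesis using ip_incid[OF K(1) b(1) _ q0] K(2) assms(7) by simp
    qed
  qed
  have Gs: "g P = 0" if "g \<in> G1" "P \<notin> pg_points n" for g P
    using that by (auto simp: G1_def incid_def)
  have "c \<in> pdual n (pcode n (n - k)) \<longleftrightarrow> c \<in> pdual n (pcode n k)" if c: "c \<in> pcode n k" for c :: "(nat \<Rightarrow> 'a) set \<Rightarrow> 'b"
  proof -
    have c': "c \<in> C.span G1" using c by (simp add: pcode_def G1_def)
    obtain s where s: "\<forall>w\<in>G1 \<union> G2. (\<Sum>P\<in>pg_points n. c P * w P) = s" "s \<noteq> 0 \<longrightarrow> G1 \<noteq> {}"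
        "\<forall>P. P \<notin> pg_points n \<longrightarrow> c P = 0"
    proof -
      have "\<exists>s. (\<forall>w\<in>G1 \<union> G2. (\<Sum>P\<in>pg_points n. c P * w P) = s) \<and> (s \<noteq> 0 \<longrightarrow> G1 \<noteq> {}) \<and>
             (\<forall>P. P \<notin> pg_points n \<longrightarrow> c P = 0)"
      proof (rule code_const[of G1 "G1 \<union> G2" n c])
        show "\<And>g w. g \<in> G1 \<Longrightarrow> w \<in> G1 \<union> G2 \<Longrightarrow> (\<Sum>P\<in>pg_points n. g P * w P) = 1" by (rule GW)
        show "\<And>g P. g \<in> G1 \<Longrightarrow> P \<notin> pg_points n \<Longrightarrow> g P = 0" by (rule Gs)
        show "c \<in> C.span G1" by (rule c')
      qed
      then show ?thesis using that by blast
    qed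
    have d1: "c \<in> pdual n (pcode n k) \<longleftrightarrow> (\<forall>g\<in>G1. (\<Sum>P\<in>pg_points n. c P * g P) = 0)"
      using dual_span[of c n G1] s(3) by (simp add: pcode_def G1_def)
    have d2: "c \<in> pdual n (pcode n (n - k)) \<longleftrightarrow> (\<forall>g\<in>G2. (\<Sum>P\<in>pg_points n. c P * g P) = 0)"
      using dual_span[of c n G2] s(3) by (simp add: pcode_def G2_def)
    show ?thesis
    proof (cases "s = 0")
      case True then show ?thesis using d1 d2 s(1) by auto
    next
      case False
      then obtain g where g: "g \<in> G1" using s(2) by blast
      then obtain K where K: "lin_sub n (k + 1) (K :: (nat \<Rightarrow> 'a) set)"
        by (auto simp: G1_def pg_subspaces_def)
      have le: "n - k + 1 \<le> k + 1" using assms(6) by simp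
      obtain L where L: "lin_sub n (n - k + 1) (L :: (nat \<Rightarrow> 'a) set)"
        using sub_exists[OF K le] by blast
      have "incid n L \<in> G2" using L by (auto simp: G2_def pg_subspaces_def)
      then have "c \<notin> pdual n (pcode n (n - k))" using d2 s(1) False by auto
      moreover have "c \<notin> pdual n (pcode n k)" using d1 s(1) False g by auto
      ultimately show ?thesis by simp
    qed
  qed
  then show ?thesis by (intro Set.set_eqI) blast
qed

end
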